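(* Let $n$ and $0<n_1<\cdots<n_d<n$ be integers with $m_1=n_1$, $m_k=n_k-n_{k-1}$ ($2\le k\le d$), $m_{d+1}=n-n_d$, and regard $\mathrm{Flag}(n_1,\dots,n_d;n)=\{(VJ_1V^{\mathsf T},\dots,VJ_{d+1}V^{\mathsf T}):V\in\mathrm{O}(n)\}$ as a submanifold of $(\mathbb{R}^{n\times n})^{d+1}$ with the Frobenius inner product. Let $V(t)$ be a differentiable curve in $\mathrm{O}(n)$ with $\Lambda(t)=V(t)^{\mathsf T}\dot V(t)$, $\Lambda(k,k)\equiv0$ ($k=1,\dots,d+1$), $c(t)=V(t)(J_1,\dots,J_{d+1})V(t)^{\mathsf T}$, and let $X(t)\in\mathfrak{so}(n)$ be differentiable with $X(k,k)\equiv0$. Define \begin{align*} T_1(t)&=V(t)\big(\dot XJ_k-J_k\dot X\big)_{k=1}^{d+1}V(t)^{\mathsf T},\\ T_2(t)&=V(t)\big(\Lambda XJ_k+J_kX\Lambda\big)_{k=1}^{d+1}V(t)^{\mathsf T},\\ T_3(t)&=V(t)\big(\Lambda J_kX+XJ_k\Lambda\big)_{k=1}^{d+1}V(t)^{\mathsf T}. \end{align*} Then (1) $T_1(t)\in\mathbb{T}_{c(t)}\mathrm{Flag}(n_1,\dots,n_d;n)$; (2) the orthogonal projection of $T_2(t)$ onto $\mathbb{T}_{c(t)}\mathrm{Flag}(n_1,\dots,n_d;n)$ is $V(t)(W_1(t),\dots,W_{d+1}(t))V(t)^{\mathsf T}$, where \[ W_k(p,q)=\begin{cases}\sum_{s=1}^{d+1}X(k,s)\Lambda(s,q)-\sum_{s=1}^{d+1}\Lambda(s,k)^{\mathsf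 T}X(q,s)^{\mathsf T}, & p=k,\ q\neq k,\\[2pt] \sum_{s=1}^{d+1}\Lambda(s,p)^{\mathsf T}X(k,s)^{\mathsf T}-\sum_{s=1}^{d+1}X(p,s)\Lambda(s,k), & q=k,\ p\neq k,\\[2pt] 0, & \text{otherwise};\end{cases} \] (3) the orthogonal projection of $T_3(t)$ onto $\mathbb{T}_{c(t)}\mathrm{Flag}(n_1,\dots,n_d;n)$ is zero.
   Context: $J_k=\operatorname{diag}(-I_{m_1},\dots,-I_{m_{k-1}},I_{m_k},-I_{m_{k+1}},\dots,-I_{m_{d+1}})$ for $k=1,\dots,d+1$. $V(M_k)_{k=1}^{d+1}V^{\mathsf T}$ denotes $(VM_1V^{\mathsf T},\dots,VM_{d+1}V^{\mathsf T})$. For an $n\times n$ matrix $M$, $M(p,q)$ denotes its $(p,q)$ block in the partition $n=m_1+\cdots+m_{d+1}$. *)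

theory Defs
  imports Complex_Main "Jordan_Normal_Form.Matrix"
begin

text \<open>Block partition n = m_1 + ... + m_(d+1) given by 0 < ns 1 < ... < ns d < n.\<close>

definition bd :: "nat \<Rightarrow> nat \<Rightarrow> (nat \<Rightarrow> nat) \<Rightarrow> nat \<Rightarrow> nat" where
  "bd n d ns k = (if k = 0 then 0 else if k \<le> d then ns k else n)"

definition blk :: "nat \<Rightarrow> nat \<Rightarrow> (nat \<Rightarrow> nat) \<Rightarrow> nat \<Rightarrow> nat set" where
  "blk n d ns k = {bd n d ns (k - 1) ..< bd n d ns k}"

definition bsize :: "nat \<Rightarrow> nat \<Rightarrow> (nat \<Rightarrow> nat) \<Rightarrow> nat \<Rightarrow> nat" where
  "bsize n d ns k = bd n d ns k - bd n d ns (k - 1)"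

definition bof :: "nat \<Rightarrow> nat \<Rightarrow> (nat \<Rightarrow> nat) \<Rightarrow> nat \<Rightarrow> nat" where
  "bof n d ns i = (THE k. k \<in> {1..Suc d} \<and> i \<in> blk n d ns k)"

definition blockm :: "nat \<Rightarrow> nat \<Rightarrow> (nat \<Rightarrow> nat) \<Rightarrow> real mat \<Rightarrow> nat \<Rightarrow> nat \<Rightarrow> real mat" where
  "blockm n d ns M p q = mat (bsize n d ns p) (bsize n d ns q)
      (\<lambda>(a, b). M $$ (bd n d ns (p - 1) + a, bd n d ns (q - 1) + b))"

definition bsum :: "nat \<Rightarrow> nat \<Rightarrow> (nat \<Rightarrow> real mat) \<Rightarrow> nat set \<Rightarrow> real mat" where
  "bsum r c f S = mat r c (\<lambda>(a, b). \<Sum>s\<in>S. f s $$ (a, b))"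

definition assemble :: "nat \<Rightarrow> nat \<Rightarrow> (nat \<Rightarrow> nat) \<Rightarrow> (nat \<Rightarrow> nat \<Rightarrow> real mat) \<Rightarrow> real mat" where
  "assemble n d ns B = mat n n (\<lambda>(i, j).
      B (bof n d ns i) (bof n d ns j) $$
        (i - bd n d ns (bof n d ns i - 1), j - bd n d ns (bof n d ns j - 1)))"

definition Jmat :: "nat \<Rightarrow> nat \<Rightarrow> (nat \<Rightarrow> nat) \<Rightarrow> nat \<Rightarrow> real mat" where
  "Jmat n d ns k = mat n n (\<lambda>(i, j). if i = j then (if i \<in> blk n d ns k then 1 else -1) else 0)"

definition orthogonal_group :: "nat \<Rightarrow> real mat set" where
  "orthogonal_group n = {V \<in> carrier_mat n n. V\<^sup>T * V = 1\<^sub>m n}"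

definition skew_mats :: "nat \<Rightarrow> real mat set" where
  "skew_mats n = {X \<in> carrier_mat n n. X\<^sup>T = - X}"

text \<open>(d+1)-tuples of n x n matrices, indexed by k = 1..d+1 (components outside are 0).\<close>
definition tup :: "nat \<Rightarrow> nat \<Rightarrow> (nat \<Rightarrow> real mat) \<Rightarrow> nat \<Rightarrow> real mat" where
  "tup n d f = (\<lambda>k. if k \<in> {1..Suc d} then f k else 0\<^sub>m n n)"

definition ambient :: "nat \<Rightarrow> nat \<Rightarrow> (nat \<Rightarrow> real mat) set" where
  "ambient n d = {v. \<forall>k. if k \<in> {1..Suc d} then v k \<in> carrier_mat n n else v k = 0\<^sub>m n n}"

definition frob :: "nat \<Rightarrow> nat \<Rightarrow> (nat \<Rightarrow> real mat) \<Rightarrow> (nat \<Rightarrow> real mat) \<Rightarrow> real" where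
  "frob n d A B = (\<Sum>k\<in>{1..Suc d}. \<Sum>i<n. \<Sum>j<n. A k $$ (i, j) * B k $$ (i, j))"

definition flag :: "nat \<Rightarrow> nat \<Rightarrow> (nat \<Rightarrow> nat) \<Rightarrow> (nat \<Rightarrow> real mat) set" where
  "flag n d ns = {tup n d (\<lambda>k. V * Jmat n d ns k * V\<^sup>T) | V. V \<in> orthogonal_group n}"

definition tangent_space :: "nat \<Rightarrow> nat \<Rightarrow> (nat \<Rightarrow> real mat) set \<Rightarrow> (nat \<Rightarrow> real mat) \<Rightarrow> (nat \<Rightarrow> real mat) set" where
  "tangent_space n d M c = {v \<in> ambient n d. \<exists>\<gamma> e. 0 < e \<and> (\<forall>t. \<bar>t\<bar> < e \<longrightarrow> \<gamma> t \<in> M) \<and> \<gamma> 0 = c \<and>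
      (\<forall>k\<in>{1..Suc d}. \<forall>i<n. \<forall>j<n.
         ((\<lambda>t. \<gamma> t k $$ (i, j)) has_real_derivative (v k $$ (i, j))) (at 0))}"

definition is_orth_proj :: "nat \<Rightarrow> nat \<Rightarrow> (nat \<Rightarrow> real mat) set \<Rightarrow> (nat \<Rightarrow> real mat) \<Rightarrow> (nat \<Rightarrow> real mat) \<Rightarrow> bool" where
  "is_orth_proj n d S Y Z \<longleftrightarrow> Z \<in> S \<and> (\<forall>U\<in>S. frob n d Y U = frob n d Z U)"

definition mat_deriv :: "nat \<Rightarrow> (real \<Rightarrow> real mat) \<Rightarrow> (real \<Rightarrow> real mat) \<Rightarrow> bool" where
  "mat_deriv n A A' \<longleftrightarrow> (\<forall>t. A' t \<in> carrier_mat n n \<and>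
      (\<forall>i<n. \<forall>j<n. ((\<lambda>s. A s $$ (i, j)) has_real_derivative (A' t $$ (i, j))) (at t)))"

definition Wblk :: "nat \<Rightarrow> nat \<Rightarrow> (nat \<Rightarrow> nat) \<Rightarrow> real mat \<Rightarrow> real mat \<Rightarrow> nat \<Rightarrow> nat \<Rightarrow> nat \<Rightarrow> real mat" where
  "Wblk n d ns X L k p q =
    (let r = bsize n d ns p; c = bsize n d ns q; B = blockm n d ns in
     if p = k \<and> q \<noteq> k then
       bsum r c (\<lambda>s. B X k s * B L s q) {1..Suc d}
       - bsum r c (\<lambda>s. (B L s k)\<^sup>T * (B X q s)\<^sup>T) {1..Suc d}
     else if q = k \<and> p \<noteq> k then
       bsum r c (\<lambda>s. (B L s p)\<^sup>T * (B X k s)\<^sup>T) {1..Suc d}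
       - bsum r c (\<lambda>s. B X p s * B L s k) {1..Suc d}
     else 0\<^sub>m r c)"

end

theory Submission
  imports Defs "Jordan_Normal_Form.Determinant"
begin

locale blocks =
  fixes n d :: nat and ns :: "nat \<Rightarrow> nat"
  assumes d_pos: "1 \<le> d"
    and ns_first: "0 < ns 1"
    and ns_mono: "\<forall>k\<in>{1..<d}. ns k < ns (Suc k)"
    and ns_last: "ns d < n"
begin

abbreviation "BD \<equiv> bd n d ns"
abbreviation "BLK \<equiv> blk n d ns"
abbreviation "BOF \<equiv> bof n d ns"
abbreviation "BSZ \<equiv> bsize n d ns"

lemma ns_le: assumes "1 \<le> k" "k \<le> l" "l \<le> d" shows "ns k \<le> ns l"
  using assms(2,3)
proof (induction l rule: dec_induct)
  case base then show ?case by simp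
next
  case (step m)
  then have "m \<in> {1..<d}" using assms(1) by auto
  then have "ns m < ns (Suc m)" using ns_mono by blast
  then show ?case using step by simp
qed

lemma bd_mono: "k \<le> l \<Longrightarrow> BD k \<le> BD l"
  using ns_le[of k l] ns_le[of k d] ns_last by (auto simp: bd_def)

lemma bd0[simp]: "BD 0 = 0" by (simp add: bd_def)
lemma bdS[simp]: "BD (Suc d) = n" by (simp add: bd_def)
lemma bd_le_n: "BD k \<le> n"
  using bd_mono[of k "Suc (Suc d) + k"] by (simp add: bd_def)

lemma blk_sub: "BLK k \<subseteq> {..<n}"
  using bd_le_n[of k] by (auto simp: blk_def)

lemma blk_disj: "i \<in> BLK k \<Longrightarrow> i \<in> BLK l \<Longrightarrow> k = l"
proof (rule ccontr)
  assume a: "i \<in> BLK k" "i \<in> BLK l" "k \<noteq> l"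
  { fix k l assume "i \<in> BLK k" "i \<in> BLK l" "k < l"
    moreover have "BD k \<le> BD (l - 1)" using \<open>k < l\<close> by (intro bd_mono) simp
    ultimately have False by (auto simp: blk_def) }
  with a show False by (metis linorder_neqE_nat)
qed

lemma blk_ex: assumes "i < n" shows "\<exists>k\<in>{1..Suc d}. i \<in> BLK k"
proof -
  have ex: "\<exists>k. i < BD k" using assms bdS by (intro exI[of _ "Suc d"]) simp
  define k where "k = (LEAST k. i < BD k)"
  have k1: "i < BD k" unfolding k_def by (rule LeastI_ex[OF ex])
  have k0: "k \<noteq> 0" proof assume "k = 0" with k1 show False by simp qed
  have k2: "\<not> i < BD (k - 1)"
  proof -
    have "k - 1 < k" using k0 by simp
    then show ?thesis unfolding k_def by (rule not_less_Least)
  qed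
  have k3: "k \<le> Suc d" unfolding k_def using assms by (simp add: Least_le)
  show ?thesis using k0 k1 k2 k3 by (auto simp: blk_def intro!: bexI[of _ k])
qed

lemma bof_blk: assumes "i < n" shows "BOF i \<in> {1..Suc d}" "i \<in> BLK (BOF i)"
proof -
  obtain k where k: "k\<in>{1..Suc d}" "i \<in> BLK k" using blk_ex[OF assms] by blast
  have "BOF i = k" unfolding bof_def
    by (rule the_equality) (use k blk_disj in auto)
  then show "BOF i \<in> {1..Suc d}" "i \<in> BLK (BOF i)" using k by auto
qed

lemma bof_eq: "i \<in> BLK k \<Longrightarrow> BOF i = k"
  using bof_blk[of i] blk_disj[of i k "BOF i"] blk_sub[of k] by auto

lemma blk_sum: "(\<Sum>s\<in>{1..Suc d}. \<Sum>c\<in>BLK s. f c) = (\<Sum>c<n. f c)"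
proof -
  have "m \<le> Suc d \<Longrightarrow> (\<Sum>s\<in>{1..m}. \<Sum>c\<in>BLK s. f c) = (\<Sum>c\<in>{0..<BD m}. f c)" for m
  proof (induction m)
    case 0 then show ?case by simp
  next
    case (Suc m)
    have "(\<Sum>s\<in>{1..Suc m}. \<Sum>c\<in>BLK s. f c) = (\<Sum>s\<in>{1..m}. \<Sum>c\<in>BLK s. f c) + (\<Sum>c\<in>BLK (Suc m). f c)"
      by simp
    also have "\<dots> = (\<Sum>c\<in>{0..<BD m}. f c) + (\<Sum>c\<in>{BD m..<BD (Suc m)}. f c)"
      using Suc by (simp add: blk_def)
    also have "\<dots> = (\<Sum>c\<in>{0..<BD (Suc m)}. f c)"
      by (rule sum.atLeastLessThan_concat) (auto intro: bd_mono)
    finally show ?case .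
  qed
  from this[of "Suc d"] show ?thesis by (simp add: atLeast0LessThan)
qed

end


definition mdat :: "nat \<Rightarrow> (real \<Rightarrow> real mat) \<Rightarrow> real mat \<Rightarrow> real \<Rightarrow> bool" where
  "mdat n A A' x \<longleftrightarrow> (\<forall>i<n. \<forall>j<n. ((\<lambda>s. A s $$ (i,j)) has_real_derivative A' $$ (i,j)) (at x))"

lemma mult_entry: "A \<in> carrier_mat n n \<Longrightarrow> B \<in> carrier_mat n n \<Longrightarrow> i < n \<Longrightarrow> j < n \<Longrightarrow>
  (A * B) $$ (i,j) = (\<Sum>c<n. A $$ (i,c) * B $$ (c,j))"
  by (simp add: scalar_prod_def lessThan_atLeast0)

lemma mdat_mult:
  assumes A: "\<And>s. A s \<in> carrier_mat n n" and B: "\<And>s. B s \<in> carrier_mat n n"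
    and A': "A' \<in> carrier_mat n n" and B': "B' \<in> carrier_mat n n"
    and dA: "mdat n A A' x" and dB: "mdat n B B' x"
  shows "mdat n (\<lambda>s. A s * B s) (A' * B x + A x * B') x"
  unfolding mdat_def
proof (intro allI impI)
  fix i j assume ij: "i < n" "j < n"
  have e: "(\<lambda>s. (A s * B s) $$ (i,j)) = (\<lambda>s. \<Sum>c<n. A s $$ (i,c) * B s $$ (c,j))"
    using mult_entry[OF A B ij] by auto
  have r: "(A' * B x + A x * B') $$ (i,j) = (\<Sum>c<n. A' $$ (i,c) * B x $$ (c,j) + A x $$ (i,c) * B' $$ (c,j))"
    using ij A[of x] B[of x] A' B' by (simp add: mult_entry[OF A' B[of x] ij] mult_entry[OF A[of x] B' ij] sum.distrib)
  show "((\<lambda>s. (A s * B s) $$ (i,j)) has_real_derivative (A' * B x + A x * B') $$ (i,j)) (at x)"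
    unfolding e r
    by (intro DERIV_sum, rule DERIV_cong[OF DERIV_mult]) (use dA dB ij in \<open>auto simp: mdat_def ac_simps\<close>)
qed

lemma mdat_const: "mdat n (\<lambda>s. M) (0\<^sub>m n n) x"
  by (simp add: mdat_def)

lemma mdat_transpose: assumes "\<And>s. A s \<in> carrier_mat n n" "A' \<in> carrier_mat n n" "mdat n A A' x"
  shows "mdat n (\<lambda>s. (A s)\<^sup>T) (A'\<^sup>T) x"
proof -
  have "dim_row (A s) = n" "dim_col (A s) = n" for s using assms(1)[of s] by auto
  then show ?thesis using assms by (auto simp: mdat_def)
qed

lemma orth_mult: assumes "A \<in> orthogonal_group n" "B \<in> orthogonal_group n"
  shows "A * B \<in> orthogonal_group n"
proof -
  have c: "A \<in> carrier_mat n n" "B \<in> carrier_mat n n" "A\<^sup>T * A = 1\<^sub>m n" "B\<^sup>T * B = 1\<^sub>m n"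
    using assms by (auto simp: orthogonal_group_def)
  have "(A * B)\<^sup>T * (A * B) = (B\<^sup>T * A\<^sup>T) * (A * B)"
    using c by (simp add: transpose_mult[of A n n B n])
  also have "\<dots> = B\<^sup>T * (A\<^sup>T * (A * B))" using c by (meson assoc_mult_mat mult_carrier_mat transpose_carrier_mat)
  also have "A\<^sup>T * (A * B) = (A\<^sup>T * A) * B" by (rule assoc_mult_mat[symmetric]) (use c in auto)
  also have "B\<^sup>T * ((A\<^sup>T * A) * B) = 1\<^sub>m n" using c by simp
  finally show ?thesis using c by (simp add: orthogonal_group_def)
qed

definition rot :: "nat \<Rightarrow> nat \<Rightarrow> nat \<Rightarrow> real \<Rightarrow> real mat" where
  "rot n i j th = (if i = j then 1\<^sub>m n else mat n n (\<lambda>(a,b). if a = b then (if a = i \<or> a = j then cos th else 1)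
      else if a = i \<and> b = j then sin th else if a = j \<and> b = i then - sin th else 0))"

definition gder :: "nat \<Rightarrow> nat \<Rightarrow> nat \<Rightarrow> real \<Rightarrow> real mat" where
  "gder n i j w = mat n n (\<lambda>(a,b). (if a = i \<and> b = j then w else 0) - (if a = j \<and> b = i then w else 0))"

lemma rot_carrier[simp]: "rot n i j th \<in> carrier_mat n n" by (simp add: rot_def)
lemma gder_carrier[simp]: "gder n i j w \<in> carrier_mat n n" by (simp add: gder_def)
lemma rot_dims[simp]: "dim_row (rot n i j th) = n" "dim_col (rot n i j th) = n" by (auto simp: rot_def)
lemma gder_dims[simp]: "dim_row (gder n i j w) = n" "dim_col (gder n i j w) = n" by (auto simp: gder_def)
lemma rot0: "rot n i j 0 = 1\<^sub>m n" by (auto simp: rot_def)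

lemma rot_deriv: "mdat n (\<lambda>s. rot n i j (s * w)) (gder n i j w) 0"
proof (cases "i = j")
  case True then show ?thesis by (simp add: mdat_def rot_def gder_def)
next
  case False
  show ?thesis unfolding mdat_def
  proof (intro allI impI)
    fix a b assume ab: "a < n" "b < n"
    have e: "(\<lambda>s. rot n i j (s * w) $$ (a,b)) = (\<lambda>s. if a = b then (if a = i \<or> a = j then cos (s*w) else 1)
      else if a = i \<and> b = j then sin (s*w) else if a = j \<and> b = i then - sin (s*w) else 0)"
      using False ab by (auto simp: rot_def)
    show "((\<lambda>s. rot n i j (s * w) $$ (a,b)) has_real_derivative gder n i j w $$ (a,b)) (at 0)"
      unfolding e using False ab
      by (cases "a=b"; cases "a=i"; cases "a=j"; cases "b=i"; cases "b=j") (auto simp: gder_def intro!: derivative_eq_intros)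
  qed
qed

lemma rot_orth: assumes "i < n" "j < n" shows "rot n i j th \<in> orthogonal_group n"
proof (cases "i = j")
  case True then show ?thesis by (simp add: rot_def orthogonal_group_def)
next
  case False
  let ?R = "rot n i j th"
  have R: "?R $$ (c,a) = (if c = a then (if a = i \<or> a = j then cos th else 1)
      else if c = i \<and> a = j then sin th else if c = j \<and> a = i then - sin th else 0)" if "c < n" "a < n" for c a
    using that False by (simp add: rot_def)
  have "(?R\<^sup>T * ?R) $$ (a,b) = 1\<^sub>m n $$ (a,b)" if ab: "a < n" "b < n" for a b
  proof -
    have "(?R\<^sup>T * ?R) $$ (a,b) = (\<Sum>c<n. ?R $$ (c,a) * ?R $$ (c,b))"
      using ab by (subst mult_entry[of _ n]) auto
    also have "\<dots> = (\<Sum>c\<in>{i,j}. ?R $$ (c,a) * ?R $$ (c,b)) + (\<Sum>c\<in>{..<n}-{i,j}. ?R $$ (c,a) * ?R $$ (c,b))"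
      using assms by (subst sum.subset_diff[of "{i,j}"]) auto
    also have "(\<Sum>c\<in>{..<n}-{i,j}. ?R $$ (c,a) * ?R $$ (c,b)) = (\<Sum>c\<in>{..<n}-{i,j}. if c = a \<and> c = b then 1 else 0)"
      using ab by (intro sum.cong) (auto simp: R)
    also have "\<dots> = (if a = b \<and> a \<notin> {i,j} then 1 else 0)"
      using ab by (cases "a = b") (auto simp: sum.delta' intro!: sum.neutral split: if_splits)
    finally show ?thesis using False ab assms
      by (auto simp: R sin_squared_eq power2_eq_square algebra_simps)
  qed
  then show ?thesis unfolding orthogonal_group_def by (auto intro!: eq_matI)
qed


definition Gp :: "nat \<Rightarrow> (nat \<times> nat \<times> real) list \<Rightarrow> real \<Rightarrow> real mat" where
  "Gp n ps s = foldr (\<lambda>(i,j,w) M. rot n i j (s*w) * M) ps (1\<^sub>m n)"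
definition Dp :: "nat \<Rightarrow> (nat \<times> nat \<times> real) list \<Rightarrow> real mat" where
  "Dp n ps = foldr (\<lambda>(i,j,w) M. gder n i j w + M) ps (0\<^sub>m n n)"

lemma Gp_props: assumes "\<forall>(i,j,w)\<in>set ps. i < n \<and> j < n"
  shows "(\<forall>s. Gp n ps s \<in> orthogonal_group n) \<and> Gp n ps 0 = 1\<^sub>m n \<and> Dp n ps \<in> carrier_mat n n
     \<and> mdat n (Gp n ps) (Dp n ps) 0"
  using assms
proof (induction ps)
  case Nil then show ?case by (simp add: Gp_def Dp_def orthogonal_group_def mdat_def)
next
  case (Cons x ps)
  obtain i j w where x: "x = (i,j,w)" by (cases x) auto
  have ij: "i < n" "j < n" using Cons.prems x by auto
  have IH: "(\<forall>s. Gp n ps s \<in> orthogonal_group n) \<and> Gp n ps 0 = 1\<^sub>m n \<and> Dp n ps \<in> carrier_mat n n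
     \<and> mdat n (Gp n ps) (Dp n ps) 0" using Cons by auto
  have G: "Gp n (x # ps) s = rot n i j (s*w) * Gp n ps s" for s by (simp add: Gp_def x)
  have D: "Dp n (x # ps) = gder n i j w + Dp n ps" by (simp add: Dp_def x)
  have Gc: "Gp n ps s \<in> carrier_mat n n" for s using IH by (auto simp: orthogonal_group_def)
  have md: "mdat n (\<lambda>s. rot n i j (s*w) * Gp n ps s) (gder n i j w * Gp n ps 0 + rot n i j (0*w) * Dp n ps) 0"
    by (rule mdat_mult) (use IH Gc rot_deriv in auto)
  have Dc: "Dp n ps \<in> carrier_mat n n" and G0: "Gp n ps 0 = 1\<^sub>m n" using IH by auto
  have eqD: "gder n i j w * Gp n ps 0 + rot n i j (0*w) * Dp n ps = gder n i j w + Dp n ps"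
    by (simp add: G0 rot0 left_mult_one_mat[OF Dc])
  have o: "Gp n (x # ps) s \<in> orthogonal_group n" for s
    unfolding G by (rule orth_mult[OF rot_orth[OF ij]]) (use IH in blast)
  have g0: "Gp n (x # ps) 0 = 1\<^sub>m n" unfolding G by (simp add: G0 rot0)
  have dc: "Dp n (x # ps) \<in> carrier_mat n n" unfolding D using Dc by simp
  have m: "mdat n (Gp n (x # ps)) (Dp n (x # ps)) 0"
    using md unfolding eqD D[symmetric] G[symmetric] by simp
  show ?case using o g0 dc m by blast
qed

lemma Dp_entry: "a < n \<Longrightarrow> b < n \<Longrightarrow> Dp n ps $$ (a,b) =
   sum_list (map (\<lambda>(i,j,w). (if a = i \<and> b = j then w else 0) - (if a = j \<and> b = i then w else 0)) ps)"
proof (induction ps)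
  case Nil then show ?case by (simp add: Dp_def)
next
  case (Cons x ps)
  have c: "Dp n ps \<in> carrier_mat n n" by (induction ps) (auto simp: Dp_def split: prod.splits)
  obtain i j w where x: "x = (i,j,w)" by (cases x) auto
  show ?case using Cons c by (simp add: Dp_def x gder_def)
qed

lemma sum_list_map_concat: "sum_list (map f (concat xss)) = sum_list (map (\<lambda>xs. sum_list (map f xs)) xss)"
  by (induction xss) auto

lemma dsum1: "a < (n::nat) \<Longrightarrow> b < n \<Longrightarrow> (\<Sum>i<n. \<Sum>j<n. if a = i \<and> b = j then f i j else 0) = (f a b :: real)"
proof -
  assume ab: "a < n" "b < n"
  have "(\<Sum>j<n. if a = i \<and> b = j then f i j else 0) = (if a = i then f i b else 0)" for i
  proof (cases "a = i")
    case True
    then have "(\<Sum>j<n. if a = i \<and> b = j then f i j else 0) = (\<Sum>j<n. if b = j then f i j else 0)" by simp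
    also have "\<dots> = f i b" using ab by (subst sum.delta') auto
    finally show ?thesis using True by simp
  qed simp
  then show ?thesis using ab by simp
qed

lemma dsum2: "a < (n::nat) \<Longrightarrow> b < n \<Longrightarrow> (\<Sum>i<n. \<Sum>j<n. if a = j \<and> b = i then f i j else 0) = (f b a :: real)"
proof -
  assume ab: "a < n" "b < n"
  have "(\<Sum>j<n. if a = j \<and> b = i then f i j else 0) = (if b = i then f i a else 0)" for i
  proof (cases "b = i")
    case True
    then have "(\<Sum>j<n. if a = j \<and> b = i then f i j else 0) = (\<Sum>j<n. if a = j then f i j else 0)" by simp
    also have "\<dots> = f i a" using ab by (subst sum.delta') auto
    finally show ?thesis using True by simp
  qed simp
  then show ?thesis using ab by simp
qed

lemma orth_curve: assumes O: "Om \<in> carrier_mat n n" "Om\<^sup>T = - Om"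
  shows "\<exists>G. (\<forall>s. G s \<in> orthogonal_group n) \<and> G 0 = 1\<^sub>m n \<and> mdat n G Om 0"
proof -
  define ps where "ps = concat (map (\<lambda>i. map (\<lambda>j. (i, j, Om $$ (i,j) / 2)) [0..<n]) [0..<n])"
  have P: "\<forall>(i,j,w)\<in>set ps. i < n \<and> j < n" by (auto simp: ps_def)
  have "Dp n ps = Om"
  proof (rule eq_matI)
    fix a b assume "a < dim_row Om" "b < dim_col Om"
    then have ab: "a < n" "b < n" using O by auto
    have "Om $$ (b,a) = Om\<^sup>T $$ (a,b)" using ab O(1) by simp
    also have "\<dots> = (- Om) $$ (a,b)" by (simp only: O(2))
    also have "\<dots> = - Om $$ (a,b)" using ab O(1) by simp
    finally have sk: "Om $$ (b,a) = - Om $$ (a,b)" .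
    have "Dp n ps $$ (a,b) = (\<Sum>i<n. \<Sum>j<n. (if a = i \<and> b = j then Om $$ (i,j) / 2 else 0)
         - (if a = j \<and> b = i then Om $$ (i,j) / 2 else 0))"
      using ab by (simp add: Dp_entry ps_def sum_list_map_concat o_def sum_set_upt_conv_sum_list_nat[symmetric]
          lessThan_atLeast0)
    also have "\<dots> = Om $$ (a,b) / 2 - Om $$ (b,a) / 2"
      using ab by (simp add: sum_subtractf dsum1 dsum2)
    also have "\<dots> = Om $$ (a,b)" using sk by simp
    finally show "Dp n ps $$ (a,b) = Om $$ (a,b)" .
  next
    show "dim_row (Dp n ps) = dim_row Om" "dim_col (Dp n ps) = dim_col Om"
      using Gp_props[OF P] O by auto
  qed
  then show ?thesis using Gp_props[OF P] by (intro exI[of _ "Gp n ps"]) auto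
qed


definition fr :: "nat \<Rightarrow> real mat \<Rightarrow> real mat \<Rightarrow> real" where
  "fr n A B = (\<Sum>i<n. \<Sum>j<n. A $$ (i,j) * B $$ (i,j))"

lemma mdat_lmult: assumes "\<And>s. A s \<in> carrier_mat n n" "A' \<in> carrier_mat n n" "M \<in> carrier_mat n n"
  "mdat n A A' x" shows "mdat n (\<lambda>s. M * A s) (M * A') x"
proof -
  have "mdat n (\<lambda>s. M * A s) (0\<^sub>m n n * A x + M * A') x"
    by (rule mdat_mult) (use assms mdat_const in auto)
  moreover have "0\<^sub>m n n * A x + M * A' = M * A'"
  proof -
    have "M * A' \<in> carrier_mat n n" using assms by simp
    then show ?thesis using assms(1)[of x] by (simp add: left_mult_zero_mat[OF assms(1)[of x]])
  qed
  ultimately show ?thesis by simp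
qed

lemma mdat_rmult: assumes "\<And>s. A s \<in> carrier_mat n n" "A' \<in> carrier_mat n n" "M \<in> carrier_mat n n"
  "mdat n A A' x" shows "mdat n (\<lambda>s. A s * M) (A' * M) x"
proof -
  have "mdat n (\<lambda>s. A s * M) (A' * M + A x * 0\<^sub>m n n) x"
    by (rule mdat_mult) (use assms mdat_const in auto)
  moreover have "A' * M + A x * 0\<^sub>m n n = A' * M"
  proof -
    have "A' * M \<in> carrier_mat n n" using assms by simp
    then show ?thesis using assms(1)[of x] by (simp add: right_mult_zero_mat[OF assms(1)[of x]])
  qed
  ultimately show ?thesis by simp
qed

lemma mdat_addc: assumes "\<And>s. A s \<in> carrier_mat n n" "M \<in> carrier_mat n n" "mdat n A A' x"
  shows "mdat n (\<lambda>s. A s + M) A' x"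
proof -
  have "dim_row (A s) = n" "dim_col (A s) = n" for s using assms(1)[of s] by auto
  then show ?thesis using assms unfolding mdat_def
    by (auto intro!: DERIV_cong[OF DERIV_add[OF _ DERIV_const]])
qed

context blocks
begin

abbreviation "CM \<equiv> carrier_mat n n"

lemma sq_c: "A \<in> CM \<Longrightarrow> B \<in> CM \<Longrightarrow> A * B \<in> CM"
  "A \<in> CM \<Longrightarrow> B \<in> CM \<Longrightarrow> A + B \<in> CM"
  "A \<in> CM \<Longrightarrow> B \<in> CM \<Longrightarrow> A - B \<in> CM"
  "A \<in> CM \<Longrightarrow> - A \<in> CM"
  by auto

lemma sq_assoc: "A \<in> CM \<Longrightarrow> B \<in> CM \<Longrightarrow> C \<in> CM \<Longrightarrow> A * B * C = A * (B * C)"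
  by (rule assoc_mult_mat) auto

lemma sq_dist: "A \<in> CM \<Longrightarrow> B \<in> CM \<Longrightarrow> C \<in> CM \<Longrightarrow> (A::real mat) * (B - C) = A * B - A * C"
  "A \<in> CM \<Longrightarrow> B \<in> CM \<Longrightarrow> C \<in> CM \<Longrightarrow> (A - B) * C = A * C - B * C"
  "A \<in> CM \<Longrightarrow> B \<in> CM \<Longrightarrow> C \<in> CM \<Longrightarrow> (A::real mat) * (B + C) = A * B + A * C"
  "A \<in> CM \<Longrightarrow> B \<in> CM \<Longrightarrow> C \<in> CM \<Longrightarrow> (A + B) * C = A * C + B * C"
  "A \<in> CM \<Longrightarrow> B \<in> CM \<Longrightarrow> (- A) * B = - (A * B)"
  "A \<in> CM \<Longrightarrow> B \<in> CM \<Longrightarrow> A * (- B) = - (A * B)"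
  "A \<in> CM \<Longrightarrow> 1\<^sub>m n * A = A"
  "A \<in> CM \<Longrightarrow> A * 1\<^sub>m n = A"
  "A \<in> CM \<Longrightarrow> B \<in> CM \<Longrightarrow> (A * B)\<^sup>T = B\<^sup>T * A\<^sup>T"
  by (auto simp: mult_minus_distrib_mat minus_mult_distrib_mat mult_add_distrib_mat add_mult_distrib_mat
     transpose_mult)

lemmas sq = sq_c sq_assoc sq_dist

definition sig :: "nat \<Rightarrow> nat \<Rightarrow> real" where "sig k i = (if i \<in> BLK k then 1 else -1)"

abbreviation "J \<equiv> Jmat n d ns"

lemma J_carrier[simp]: "J k \<in> carrier_mat n n" by (simp add: Jmat_def)
lemma J_dims[simp]: "dim_row (J k) = n" "dim_col (J k) = n" by (auto simp: Jmat_def)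
lemma J_entry: "i < n \<Longrightarrow> j < n \<Longrightarrow> J k $$ (i,j) = (if i = j then sig k i else 0)"
  by (simp add: Jmat_def sig_def)
lemma J_T: "(J k)\<^sup>T = J k"
  by (rule eq_matI) (auto simp: J_entry)

lemma sum_delta_nat: "j < (m::nat) \<Longrightarrow> (\<Sum>c<m. if c = j then h c else 0) = (h j :: real)"
  by (subst sum.delta) auto

lemma multJ_r: assumes "M \<in> CM" "i < n" "j < n" shows "(M * J k) $$ (i,j) = M $$ (i,j) * sig k j"
proof -
  have "(M * J k) $$ (i,j) = (\<Sum>c<n. M $$ (i,c) * J k $$ (c,j))" by (rule mult_entry) (use assms in auto)
  also have "\<dots> = (\<Sum>c<n. if c = j then M $$ (i,c) * sig k c else 0)"
    using assms by (intro sum.cong) (auto simp: J_entry)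
  also have "\<dots> = M $$ (i,j) * sig k j" by (rule sum_delta_nat[OF assms(3)])
  finally show ?thesis .
qed

lemma multJ_l: assumes "M \<in> CM" "i < n" "j < n" shows "(J k * M) $$ (i,j) = sig k i * M $$ (i,j)"
proof -
  have "(J k * M) $$ (i,j) = (\<Sum>c<n. J k $$ (i,c) * M $$ (c,j))" by (rule mult_entry) (use assms in auto)
  also have "\<dots> = (\<Sum>c<n. if c = i then sig k c * M $$ (c,j) else 0)"
    using assms by (intro sum.cong) (auto simp: J_entry)
  also have "\<dots> = sig k i * M $$ (i,j)" by (rule sum_delta_nat[OF assms(2)])
  finally show ?thesis .
qed

lemma mult3_entry: assumes "A \<in> CM" "B \<in> CM" "C \<in> CM" "i < n" "j < n"
  shows "(A * B * C) $$ (i,j) = (\<Sum>a<n. \<Sum>b<n. A $$ (i,a) * B $$ (a,b) * C $$ (b,j))"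
proof -
  have "(A * B * C) $$ (i,j) = (\<Sum>b<n. (A * B) $$ (i,b) * C $$ (b,j))"
    by (rule mult_entry) (use assms in auto)
  also have "\<dots> = (\<Sum>b<n. \<Sum>a<n. A $$ (i,a) * B $$ (a,b) * C $$ (b,j))"
  proof (rule sum.cong[OF refl])
    fix b assume "b \<in> {..<n}"
    then have "(A * B) $$ (i,b) = (\<Sum>a<n. A $$ (i,a) * B $$ (a,b))"
      by (intro mult_entry) (use assms in auto)
    then show "(A * B) $$ (i,b) * C $$ (b,j) = (\<Sum>a<n. A $$ (i,a) * B $$ (a,b) * C $$ (b,j))"
      by (simp add: sum_distrib_right)
  qed
  also have "\<dots> = (\<Sum>a<n. \<Sum>b<n. A $$ (i,a) * B $$ (a,b) * C $$ (b,j))" by (rule sum.swap)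
  finally show ?thesis .
qed

lemma fr_conj: assumes V: "V \<in> CM" and M: "M \<in> CM" and U: "U \<in> CM"
  shows "fr n (V * M * V\<^sup>T) U = fr n M (V\<^sup>T * U * V)"
proof -
  define f where "f i j a b = V $$ (i,a) * M $$ (a,b) * V $$ (j,b) * U $$ (i,j)" for i j a b
  have "fr n (V * M * V\<^sup>T) U = (\<Sum>i<n. \<Sum>j<n. \<Sum>a<n. \<Sum>b<n. f i j a b)"
    unfolding fr_def f_def using assms
    by (intro sum.cong refl, subst mult3_entry) (auto simp: sum_distrib_right carrier_matD[OF V])
  also have "\<dots> = (\<Sum>i<n. \<Sum>a<n. \<Sum>j<n. \<Sum>b<n. f i j a b)"
    by (rule sum.cong[OF refl], rule sum.swap)
  also have "\<dots> = (\<Sum>a<n. \<Sum>i<n. \<Sum>j<n. \<Sum>b<n. f i j a b)"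
    by (rule sum.swap)
  also have "\<dots> = (\<Sum>a<n. \<Sum>i<n. \<Sum>b<n. \<Sum>j<n. f i j a b)"
    by (rule sum.cong[OF refl], rule sum.cong[OF refl], rule sum.swap)
  also have "\<dots> = (\<Sum>a<n. \<Sum>b<n. \<Sum>i<n. \<Sum>j<n. f i j a b)"
    by (rule sum.cong[OF refl], rule sum.swap)
  also have "\<dots> = fr n M (V\<^sup>T * U * V)"
    unfolding fr_def f_def using assms
    by (intro sum.cong refl, subst mult3_entry) (auto simp: sum_distrib_left mult_ac carrier_matD[OF V])
  finally show ?thesis .
qed

end


lemma mdat_const_zero: assumes "mdat n F F' x" "\<And>s. F s = C" "i < n" "j < n" shows "F' $$ (i,j) = 0"
proof -
  have "((\<lambda>s. F s $$ (i,j)) has_real_derivative F' $$ (i,j)) (at x)" using assms by (auto simp: mdat_def)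
  moreover have "(\<lambda>s. F s $$ (i,j)) = (\<lambda>s. C $$ (i,j))" using assms by auto
  ultimately have "((\<lambda>s. C $$ (i,j)) has_real_derivative F' $$ (i,j)) (at x)" by simp
  then show ?thesis using DERIV_const DERIV_unique by blast
qed

lemma orth_transpose: assumes "V \<in> orthogonal_group n" shows "V\<^sup>T \<in> orthogonal_group n" "V * V\<^sup>T = 1\<^sub>m n"
proof -
  have c: "V \<in> carrier_mat n n" "V\<^sup>T * V = 1\<^sub>m n" using assms by (auto simp: orthogonal_group_def)
  have "V * V\<^sup>T = 1\<^sub>m n" by (rule mat_mult_left_right_inverse[of "V\<^sup>T" n V]) (use c in auto)
  then show "V\<^sup>T \<in> orthogonal_group n" "V * V\<^sup>T = 1\<^sub>m n" using c by (auto simp: orthogonal_group_def)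
qed

context blocks
begin

lemma sq_more: "A \<in> CM \<Longrightarrow> B \<in> CM \<Longrightarrow> A + - B = A - (B :: real mat)"
  by (rule add_uminus_minus_mat) auto

lemma tangent_G:
  assumes V: "V \<in> orthogonal_group n" and O: "Om \<in> carrier_mat n n" "Om\<^sup>T = - Om"
  shows "tup n d (\<lambda>k. V * (Om * J k - J k * Om) * V\<^sup>T) \<in> tangent_space n d (flag n d ns) (tup n d (\<lambda>k. V * J k * V\<^sup>T))"
proof -
  obtain G where G: "\<forall>s. G s \<in> orthogonal_group n" "G 0 = 1\<^sub>m n" "mdat n G Om 0"
    using orth_curve[OF O] by blast
  have Vc: "V \<in> CM" using V by (simp add: orthogonal_group_def)
  have Gc: "G s \<in> CM" for s using G by (simp add: orthogonal_group_def)
  define ga where "ga = (\<lambda>s. tup n d (\<lambda>k. (V * G s) * J k * (V * G s)\<^sup>T))"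
  have fl: "ga s \<in> flag n d ns" for s
    unfolding flag_def ga_def using orth_mult[OF V] G(1) by blast
  have g0: "ga 0 = tup n d (\<lambda>k. V * J k * V\<^sup>T)"
    unfolding ga_def G(2) using Vc by simp
  have der: "mdat n (\<lambda>s. (V * G s) * J k * (V * G s)\<^sup>T) (V * (Om * J k - J k * Om) * V\<^sup>T) 0" for k
  proof -
    have d1: "mdat n (\<lambda>s. V * G s) (V * Om) 0" by (rule mdat_lmult) (use Gc O Vc G in auto)
    have d2: "mdat n (\<lambda>s. V * G s * J k) (V * Om * J k) 0" by (rule mdat_rmult) (use Gc O Vc d1 in auto)
    have d3: "mdat n (\<lambda>s. (V * G s)\<^sup>T) ((V * Om)\<^sup>T) 0" by (rule mdat_transpose) (use Gc O Vc d1 in auto)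
    have "mdat n (\<lambda>s. V * G s * J k * (V * G s)\<^sup>T) (V * Om * J k * (V * G 0)\<^sup>T + V * G 0 * J k * (V * Om)\<^sup>T) 0"
      by (rule mdat_mult) (use Gc O Vc d2 d3 in auto)
    moreover have "V * Om * J k * (V * G 0)\<^sup>T + V * G 0 * J k * (V * Om)\<^sup>T = V * (Om * J k - J k * Om) * V\<^sup>T"
      using Vc O by (simp add: G(2) sq sq_more)
    ultimately show ?thesis by simp
  qed
  have amb: "tup n d (\<lambda>k. V * (Om * J k - J k * Om) * V\<^sup>T) \<in> ambient n d"
    unfolding ambient_def tup_def using Vc O by auto
  show ?thesis unfolding tangent_space_def
  proof (intro CollectI conjI exI[of _ ga] exI[of _ 1] amb)
    show "\<forall>t. \<bar>t\<bar> < 1 \<longrightarrow> ga t \<in> flag n d ns" using fl by auto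
    show "ga 0 = tup n d (\<lambda>k. V * J k * V\<^sup>T)" by (rule g0)
    show "\<forall>k\<in>{1..Suc d}. \<forall>i<n. \<forall>j<n. ((\<lambda>t. ga t k $$ (i, j)) has_real_derivative
         tup n d (\<lambda>k. V * (Om * J k - J k * Om) * V\<^sup>T) k $$ (i, j)) (at 0)"
      using der unfolding ga_def tup_def mdat_def by auto
  qed simp
qed

end


context blocks
begin

lemma JJ: "J k * J k = 1\<^sub>m n"
proof (rule eq_matI)
  fix i j assume "i < dim_row (1\<^sub>m n :: real mat)" "j < dim_col (1\<^sub>m n :: real mat)"
  then have ij: "i < n" "j < n" by auto
  have "(J k * J k) $$ (i,j) = J k $$ (i,j) * sig k j" by (rule multJ_r) (use ij in auto)
  then show "(J k * J k) $$ (i,j) = 1\<^sub>m n $$ (i,j)" using ij by (auto simp: J_entry sig_def)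
qed auto

lemma JJ0: assumes "k \<noteq> l" shows "(J k + 1\<^sub>m n) * (J l + 1\<^sub>m n) = 0\<^sub>m n n"
proof (rule eq_matI)
  fix i j assume ij: "i < dim_row (0\<^sub>m n n :: real mat)" "j < dim_col (0\<^sub>m n n :: real mat)"
  then have ij: "i < n" "j < n" by auto
  have "(J k + 1\<^sub>m n) * (J l + 1\<^sub>m n) = (J k + 1\<^sub>m n) * J l + (J k + 1\<^sub>m n)"
    by (simp add: mult_add_distrib_mat[of "J k + 1\<^sub>m n" n n "J l" n "1\<^sub>m n"])
  moreover have "((J k + 1\<^sub>m n) * J l) $$ (i,j) = (J k + 1\<^sub>m n) $$ (i,j) * sig l j"
    by (rule multJ_r) (use ij in auto)
  moreover have "\<not> (i \<in> BLK k \<and> i \<in> BLK l)" using blk_disj assms by blast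
  ultimately show "((J k + 1\<^sub>m n) * (J l + 1\<^sub>m n)) $$ (i,j) = 0\<^sub>m n n $$ (i,j)"
    using ij by (auto simp: J_entry sig_def)
qed auto

lemma flagF: assumes Q: "Q \<in> orthogonal_group n"
  shows "(Q * J k * Q\<^sup>T) * (Q * J k * Q\<^sup>T) = 1\<^sub>m n"
    and "k \<noteq> l \<Longrightarrow> (Q * J k * Q\<^sup>T + 1\<^sub>m n) * (Q * J l * Q\<^sup>T + 1\<^sub>m n) = 0\<^sub>m n n"
proof -
  have Qc: "Q \<in> CM" "Q\<^sup>T * Q = 1\<^sub>m n" using Q by (auto simp: orthogonal_group_def)
  have QQ: "Q * Q\<^sup>T = 1\<^sub>m n" using orth_transpose[OF Q] by simp
  have QtQ: "Q\<^sup>T * (Q * X) = X" if "X \<in> CM" for X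
  proof -
    have "Q\<^sup>T * (Q * X) = (Q\<^sup>T * Q) * X" by (rule assoc_mult_mat[symmetric]) (use Qc that in auto)
    then show ?thesis using Qc that by simp
  qed
  have "(Q * J k * Q\<^sup>T) * (Q * J k * Q\<^sup>T) = Q * (J k * J k) * Q\<^sup>T"
    using Qc by (simp add: sq QtQ)
  also have "\<dots> = 1\<^sub>m n" using Qc QQ by (simp add: JJ)
  finally show "(Q * J k * Q\<^sup>T) * (Q * J k * Q\<^sup>T) = 1\<^sub>m n" .
  assume kl: "k \<noteq> l"
  have e: "Q * J m * Q\<^sup>T + 1\<^sub>m n = Q * (J m + 1\<^sub>m n) * Q\<^sup>T" for m
    using Qc by (simp add: sq QQ)
  have "(Q * J k * Q\<^sup>T + 1\<^sub>m n) * (Q * J l * Q\<^sup>T + 1\<^sub>m n)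
      = Q * ((J k + 1\<^sub>m n) * (J l + 1\<^sub>m n)) * Q\<^sup>T"
    unfolding e using Qc by (simp add: sq QtQ)
  also have "\<dots> = 0\<^sub>m n n" using Qc by (simp add: JJ0[OF kl])
  finally show "(Q * J k * Q\<^sup>T + 1\<^sub>m n) * (Q * J l * Q\<^sup>T + 1\<^sub>m n) = 0\<^sub>m n n" .
qed

end


context blocks
begin

lemma orth_cancel: assumes "V \<in> orthogonal_group n" "X \<in> CM" shows "V\<^sup>T * (V * X) = X"
proof -
  have c: "V \<in> CM" "V\<^sup>T * V = 1\<^sub>m n" using assms by (auto simp: orthogonal_group_def)
  have "V\<^sup>T * (V * X) = (V\<^sup>T * V) * X" by (rule assoc_mult_mat[symmetric]) (use c assms in auto)
  then show ?thesis using c assms by simp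
qed

lemma tangent_D:
  assumes V: "V \<in> orthogonal_group n"
    and u: "u \<in> tangent_space n d (flag n d ns) (tup n d (\<lambda>k. V * J k * V\<^sup>T))"
  shows tangent_D_c: "k \<in> {1..Suc d} \<Longrightarrow> u k \<in> CM"
    and tangent_D1: "k \<in> {1..Suc d} \<Longrightarrow> a < n \<Longrightarrow> b < n \<Longrightarrow> sig k a = sig k b \<Longrightarrow> (V\<^sup>T * u k * V) $$ (a,b) = 0"
    and tangent_D2: "k \<in> {1..Suc d} \<Longrightarrow> l \<in> {1..Suc d} \<Longrightarrow> k \<noteq> l \<Longrightarrow> a \<in> BLK k \<Longrightarrow> b \<in> BLK l \<Longrightarrow>
        (V\<^sup>T * u k * V) $$ (a,b) + (V\<^sup>T * u l * V) $$ (a,b) = 0"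
proof -
  define c where "c = tup n d (\<lambda>k. V * J k * V\<^sup>T)"
  have Vc: "V \<in> CM" "V\<^sup>T * V = 1\<^sub>m n" using V by (auto simp: orthogonal_group_def)
  have amb: "u \<in> ambient n d" using u by (simp add: tangent_space_def)
  then have uc: "k \<in> {1..Suc d} \<Longrightarrow> u k \<in> CM" for k unfolding ambient_def by (metis (no_types, lifting) mem_Collect_eq)
  then show "k \<in> {1..Suc d} \<Longrightarrow> u k \<in> CM" .
  obtain ga e where e: "0 < e" and gaf: "\<forall>t. \<bar>t\<bar> < e \<longrightarrow> ga t \<in> flag n d ns" and ga0: "ga 0 = c"
    and gad: "\<forall>k\<in>{1..Suc d}. \<forall>i<n. \<forall>j<n. ((\<lambda>t. ga t k $$ (i, j)) has_real_derivative (u k $$ (i, j))) (at 0)"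
    using u unfolding tangent_space_def c_def by blast
  define g2 where "g2 s = (if \<bar>s\<bar> < e then ga s else c)" for s
  have cfl: "c \<in> flag n d ns" unfolding c_def flag_def using V by blast
  have g2fl: "g2 s \<in> flag n d ns" for s using gaf cfl by (simp add: g2_def)
  have g20: "g2 0 = c" using e ga0 by (simp add: g2_def)
  have g2d: "mdat n (\<lambda>s. g2 s k) (u k) 0" if k: "k \<in> {1..Suc d}" for k
    unfolding mdat_def
  proof (intro allI impI)
    fix i j assume ij: "i < n" "j < n"
    show "((\<lambda>s. g2 s k $$ (i,j)) has_real_derivative u k $$ (i,j)) (at 0)"
      by (rule has_field_derivative_transform_within_open[of "\<lambda>t. ga t k $$ (i,j)" _ _ "{-e<..<e}"])
         (use gad k ij e in \<open>auto simp: g2_def\<close>)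
  qed
  have Qex: "\<exists>Q\<in>orthogonal_group n. \<forall>k\<in>{1..Suc d}. g2 s k \<in> CM \<and> V\<^sup>T * g2 s k * V = Q * J k * Q\<^sup>T" for s
  proof -
    obtain W where W: "W \<in> orthogonal_group n" "g2 s = tup n d (\<lambda>k. W * J k * W\<^sup>T)"
      using g2fl[of s] unfolding flag_def by blast
    have Wc: "W \<in> CM" using W by (simp add: orthogonal_group_def)
    have "V\<^sup>T * W \<in> orthogonal_group n" by (rule orth_mult[OF orth_transpose(1)[OF V] W(1)])
    moreover have "\<forall>k\<in>{1..Suc d}. g2 s k \<in> CM \<and> V\<^sup>T * g2 s k * V = (V\<^sup>T * W) * J k * (V\<^sup>T * W)\<^sup>T"
      using W(2) Wc Vc by (simp add: tup_def sq)
    ultimately show ?thesis by blast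
  qed
  then obtain Q where Q: "\<And>s. Q s \<in> orthogonal_group n"
    "\<And>s k. k \<in> {1..Suc d} \<Longrightarrow> g2 s k \<in> CM \<and> V\<^sup>T * g2 s k * V = Q s * J k * (Q s)\<^sup>T"
    by metis
  define de where "de k s = V\<^sup>T * g2 s k * V" for k s
  have dec: "de k s \<in> CM" if k: "k \<in> {1..Suc d}" for k s
  proof -
    have "g2 s k \<in> CM" using Q(2)[OF k] by blast
    then show ?thesis unfolding de_def using Vc by (simp add: sq_c)
  qed
  have de0: "k \<in> {1..Suc d} \<Longrightarrow> de k 0 = J k" for k
    using Vc V by (simp add: de_def g20 c_def tup_def sq orth_cancel)
  have ded: "k \<in> {1..Suc d} \<Longrightarrow> mdat n (de k) (V\<^sup>T * u k * V) 0" for k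
  proof -
    assume k: "k \<in> {1..Suc d}"
    have "mdat n (\<lambda>s. V\<^sup>T * g2 s k) (V\<^sup>T * u k) 0"
      by (rule mdat_lmult) (use Q(2)[OF k] uc[OF k] Vc g2d[OF k] in auto)
    then show ?thesis unfolding de_def
      by (rule mdat_rmult[rotated 3]) (use Q(2)[OF k] uc[OF k] Vc in auto)
  qed
  have deQ: "k \<in> {1..Suc d} \<Longrightarrow> de k s = Q s * J k * (Q s)\<^sup>T" for k s using Q(2) by (simp add: de_def)
  define D where "D k = V\<^sup>T * u k * V" for k
  have Dc: "D k \<in> CM" if k: "k \<in> {1..Suc d}" for k using uc[OF k] Vc by (simp add: D_def sq_c)
  show "(V\<^sup>T * u k * V) $$ (a,b) = 0"
    if k: "k \<in> {1..Suc d}" and ab: "a < n" "b < n" "sig k a = sig k b" for k a b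
  proof -
    have "mdat n (\<lambda>s. de k s * de k s) (D k * de k 0 + de k 0 * D k) 0"
      by (rule mdat_mult) (use dec[OF k] Dc[OF k] ded[OF k] in \<open>auto simp: D_def\<close>)
    then have "mdat n (\<lambda>s. de k s * de k s) (D k * J k + J k * D k) 0" using de0[OF k] by simp
    then have "(D k * J k + J k * D k) $$ (a,b) = 0"
      by (rule mdat_const_zero[where C = "1\<^sub>m n"]) (use k ab deQ flagF(1)[OF Q(1)] de0 in auto)
    moreover have "(D k * J k + J k * D k) $$ (a,b) = (D k * J k) $$ (a,b) + (J k * D k) $$ (a,b)"
      using ab Dc[OF k] by simp
    moreover have "(D k * J k) $$ (a,b) = D k $$ (a,b) * sig k b" by (rule multJ_r) (use ab Dc[OF k] in auto)
    moreover have "(J k * D k) $$ (a,b) = sig k a * D k $$ (a,b)" by (rule multJ_l) (use ab Dc[OF k] in auto)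
    moreover have "sig k a \<noteq> 0" by (simp add: sig_def)
    ultimately show ?thesis using ab by (simp add: D_def algebra_simps)
  qed
  show "(V\<^sup>T * u k * V) $$ (a,b) + (V\<^sup>T * u l * V) $$ (a,b) = 0"
    if k: "k \<in> {1..Suc d}" and l: "l \<in> {1..Suc d}" and kl: "k \<noteq> l" and a: "a \<in> BLK k" and b: "b \<in> BLK l"
    for k l a b
  proof -
    have ab: "a < n" "b < n" using a b blk_sub by auto
    have dk: "mdat n (\<lambda>s. de k s + 1\<^sub>m n) (D k) 0"
      by (rule mdat_addc) (use dec[OF k] ded[OF k] in \<open>auto simp: D_def\<close>)
    have dl: "mdat n (\<lambda>s. de l s + 1\<^sub>m n) (D l) 0"
      by (rule mdat_addc) (use dec[OF l] ded[OF l] in \<open>auto simp: D_def\<close>)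
    have "mdat n (\<lambda>s. (de k s + 1\<^sub>m n) * (de l s + 1\<^sub>m n)) (D k * (de l 0 + 1\<^sub>m n) + (de k 0 + 1\<^sub>m n) * D l) 0"
      by (rule mdat_mult) (use dec[OF k] dec[OF l] Dc[OF k] Dc[OF l] dk dl in auto)
    then have "mdat n (\<lambda>s. (de k s + 1\<^sub>m n) * (de l s + 1\<^sub>m n)) (D k * (J l + 1\<^sub>m n) + (J k + 1\<^sub>m n) * D l) 0"
      using de0[OF k] de0[OF l] by simp
    then have z: "(D k * (J l + 1\<^sub>m n) + (J k + 1\<^sub>m n) * D l) $$ (a,b) = 0"
      by (rule mdat_const_zero[where C = "0\<^sub>m n n"]) (use k l kl ab deQ flagF(2)[OF Q(1)] de0 in auto)
    have e1: "D k * (J l + 1\<^sub>m n) = D k * J l + D k" using Dc[OF k] by (simp add: sq)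
    have e2: "(J k + 1\<^sub>m n) * D l = J k * D l + D l" using Dc[OF l] by (simp add: sq)
    have "(D k * J l) $$ (a,b) = D k $$ (a,b) * sig l b" by (rule multJ_r) (use ab Dc[OF k] in auto)
    moreover have "(J k * D l) $$ (a,b) = sig k a * D l $$ (a,b)" by (rule multJ_l) (use ab Dc[OF l] in auto)
    moreover have "sig k a = 1" "sig l b = 1" using a b by (auto simp: sig_def)
    moreover have "(D k * J l + D k + (J k * D l + D l)) $$ (a,b)
        = (D k * J l) $$ (a,b) + D k $$ (a,b) + ((J k * D l) $$ (a,b) + D l $$ (a,b))"
      using ab carrier_matD[OF Dc[OF k]] carrier_matD[OF Dc[OF l]] by simp
    ultimately have "2 * (D k $$ (a,b) + D l $$ (a,b)) = 0" using z unfolding e1 e2 by simp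
    then show ?thesis by (simp add: D_def)
  qed
qed

end


context blocks
begin

lemma blk_shift: "(\<Sum>c<BSZ s. f (BD (s - 1) + c)) = (\<Sum>c\<in>BLK s. f c)"
proof -
  have le: "BD (s - 1) \<le> BD s" by (rule bd_mono) simp
  have "(\<Sum>c<BSZ s. f (BD (s - 1) + c)) = (\<Sum>c\<in>{0..<BSZ s}. f (c + BD (s - 1)))"
    by (simp add: lessThan_atLeast0 add.commute)
  also have "\<dots> = (\<Sum>c\<in>{0 + BD (s - 1)..<BSZ s + BD (s - 1)}. f c)"
    by (rule sum.shift_bounds_nat_ivl[symmetric])
  also have "\<dots> = (\<Sum>c\<in>BLK s. f c)" using le by (simp add: blk_def bsize_def)
  finally show ?thesis .
qed

lemma blockm_dims[simp]: "dim_row (blockm n d ns M p q) = BSZ p" "dim_col (blockm n d ns M p q) = BSZ q"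
  by (auto simp: blockm_def)

lemma bprod1: assumes "a < BSZ p" "b < BSZ q"
  shows "(blockm n d ns M p s * blockm n d ns N s q) $$ (a,b)
       = (\<Sum>c\<in>BLK s. M $$ (BD (p - 1) + a, c) * N $$ (c, BD (q - 1) + b))"
proof -
  have "(blockm n d ns M p s * blockm n d ns N s q) $$ (a,b)
     = (\<Sum>c<BSZ s. M $$ (BD (p - 1) + a, BD (s - 1) + c) * N $$ (BD (s - 1) + c, BD (q - 1) + b))"
    using assms by (simp add: scalar_prod_def blockm_def lessThan_atLeast0)
  also have "\<dots> = (\<Sum>c\<in>BLK s. M $$ (BD (p - 1) + a, c) * N $$ (c, BD (q - 1) + b))"
    by (rule blk_shift)
  finally show ?thesis .
qed

lemma bprod2: assumes "a < BSZ p" "b < BSZ q"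
  shows "((blockm n d ns N s p)\<^sup>T * (blockm n d ns M q s)\<^sup>T) $$ (a,b)
       = (\<Sum>c\<in>BLK s. N $$ (c, BD (p - 1) + a) * M $$ (BD (q - 1) + b, c))"
proof -
  have "((blockm n d ns N s p)\<^sup>T * (blockm n d ns M q s)\<^sup>T) $$ (a,b)
     = (\<Sum>c<BSZ s. N $$ (BD (s - 1) + c, BD (p - 1) + a) * M $$ (BD (q - 1) + b, BD (s - 1) + c))"
    using assms by (simp add: scalar_prod_def blockm_def lessThan_atLeast0)
  also have "\<dots> = (\<Sum>c\<in>BLK s. N $$ (c, BD (p - 1) + a) * M $$ (BD (q - 1) + b, c))"
    by (rule blk_shift)
  finally show ?thesis .
qed

lemma bsum_entry: "a < r \<Longrightarrow> b < c \<Longrightarrow> bsum r c f S $$ (a,b) = (\<Sum>s\<in>S. f s $$ (a,b))"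
  by (simp add: bsum_def)
lemma bsum_dims[simp]: "dim_row (bsum r c f S) = r" "dim_col (bsum r c f S) = c"
  by (auto simp: bsum_def)

lemma bof_pos: "i < n \<Longrightarrow> i - BD (BOF i - 1) < BSZ (BOF i) \<and> BD (BOF i - 1) + (i - BD (BOF i - 1)) = i"
  using bof_blk[of i] by (auto simp: blk_def bsize_def)

lemma W_entry:
  assumes X: "X \<in> CM" and L: "L \<in> CM" and i: "i < n" and j: "j < n"
  shows "assemble n d ns (Wblk n d ns X L k) $$ (i,j) =
    (if BOF i = k \<and> BOF j \<noteq> k then (X * L) $$ (i,j) - (\<Sum>c<n. L $$ (c,i) * X $$ (j,c))
     else if BOF j = k \<and> BOF i \<noteq> k then (\<Sum>c<n. L $$ (c,i) * X $$ (j,c)) - (X * L) $$ (i,j)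
     else 0)"
proof -
  define p where "p = BOF i"
  define q where "q = BOF j"
  define a where "a = i - BD (p - 1)"
  define b where "b = j - BD (q - 1)"
  have a: "a < BSZ p" "BD (p - 1) + a = i" using bof_pos[OF i] by (auto simp: a_def p_def)
  have b: "b < BSZ q" "BD (q - 1) + b = j" using bof_pos[OF j] by (auto simp: b_def q_def)
  have A: "assemble n d ns (Wblk n d ns X L k) $$ (i,j) = Wblk n d ns X L k p q $$ (a,b)"
    using i j by (simp add: assemble_def p_def q_def a_def b_def)
  have S1: "(\<Sum>s\<in>{1..Suc d}. (blockm n d ns X p s * blockm n d ns L s q) $$ (a,b)) = (X * L) $$ (i,j)"
  proof -
    have "(\<Sum>s\<in>{1..Suc d}. (blockm n d ns X p s * blockm n d ns L s q) $$ (a,b))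
       = (\<Sum>s\<in>{1..Suc d}. \<Sum>c\<in>BLK s. X $$ (i, c) * L $$ (c, j))"
      by (intro sum.cong refl) (simp only: bprod1[OF a(1) b(1)] a(2) b(2))
    also have "\<dots> = (\<Sum>c<n. X $$ (i, c) * L $$ (c, j))" by (rule blk_sum)
    also have "\<dots> = (X * L) $$ (i,j)" by (rule mult_entry[symmetric]) (use X L i j in auto)
    finally show ?thesis .
  qed
  have S2: "(\<Sum>s\<in>{1..Suc d}. ((blockm n d ns L s p)\<^sup>T * (blockm n d ns X q s)\<^sup>T) $$ (a,b))
      = (\<Sum>c<n. L $$ (c,i) * X $$ (j,c))"
  proof -
    have "(\<Sum>s\<in>{1..Suc d}. ((blockm n d ns L s p)\<^sup>T * (blockm n d ns X q s)\<^sup>T) $$ (a,b))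
       = (\<Sum>s\<in>{1..Suc d}. \<Sum>c\<in>BLK s. L $$ (c, i) * X $$ (j, c))"
      by (intro sum.cong refl) (simp only: bprod2[OF a(1) b(1)] a(2) b(2))
    also have "\<dots> = (\<Sum>c<n. L $$ (c, i) * X $$ (j, c))" by (rule blk_sum)
    finally show ?thesis .
  qed
  show ?thesis
  proof (cases "p = k \<and> q \<noteq> k")
    case True
    then show ?thesis using A a b S1 S2 unfolding Wblk_def Let_def
      by (simp add: bsum_entry p_def[symmetric] q_def[symmetric])
  next
    case F1: False
    show ?thesis
    proof (cases "q = k \<and> p \<noteq> k")
      case True
      then show ?thesis using F1 A a b S1 S2 unfolding Wblk_def Let_def
        by (simp add: bsum_entry p_def[symmetric] q_def[symmetric])
    next
      case False
      then show ?thesis using F1 A a b unfolding Wblk_def Let_def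
        by (auto simp: p_def[symmetric] q_def[symmetric])
    qed
  qed
qed

end


context blocks
begin

definition skw :: "real mat \<Rightarrow> bool" where "skw M \<longleftrightarrow> (\<forall>a<n. \<forall>b<n. M $$ (b,a) = - M $$ (a,b))"

lemma sig_bof: "a < n \<Longrightarrow> sig k a = (if BOF a = k then 1 else -1)"
  using bof_blk[of a] bof_eq[of a k] by (auto simp: sig_def)

lemma skw_prod: assumes "X \<in> CM" "L \<in> CM" "skw X" "skw L" "a < n" "b < n"
  shows "(L * X) $$ (b,a) = (X * L) $$ (a,b)"
proof -
  have "(L * X) $$ (b,a) = (\<Sum>c<n. L $$ (b,c) * X $$ (c,a))" by (rule mult_entry) (use assms in auto)
  also have "\<dots> = (\<Sum>c<n. X $$ (a,c) * L $$ (c,b))"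
  proof (rule sum.cong[OF refl])
    fix c assume "c \<in> {..<n}"
    then have "L $$ (b,c) = - L $$ (c,b)" "X $$ (c,a) = - X $$ (a,c)"
      using assms unfolding skw_def by blast+
    then show "L $$ (b,c) * X $$ (c,a) = X $$ (a,c) * L $$ (c,b)" by simp
  qed
  also have "\<dots> = (X * L) $$ (a,b)" by (rule mult_entry[symmetric]) (use assms in auto)
  finally show ?thesis .
qed

lemma skw_mat: assumes "M \<in> CM" "skw M" shows "M\<^sup>T = - M"
proof (rule eq_matI)
  fix i j assume "i < dim_row (- M)" "j < dim_col (- M)"
  then have ij: "i < n" "j < n" using assms(1) by auto
  have "M $$ (j,i) = - M $$ (i,j)" using assms(2) ij unfolding skw_def by blast
  then show "M\<^sup>T $$ (i,j) = (- M) $$ (i,j)" using ij assms(1) by simp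
qed (use assms in auto)

definition Omg :: "real mat \<Rightarrow> real mat \<Rightarrow> real mat" where
  "Omg X L = mat n n (\<lambda>(a,b). ((L * X) $$ (a,b) - (X * L) $$ (a,b)) / 2)"

lemma Omg_dims[simp]: "dim_row (Omg X L) = n" "dim_col (Omg X L) = n" by (auto simp: Omg_def)

lemma W_eq: assumes X: "X \<in> CM" and L: "L \<in> CM" and sX: "skw X" and sL: "skw L"
  shows "assemble n d ns (Wblk n d ns X L k) = Omg X L * J k - J k * Omg X L"
    and "Omg X L \<in> CM" and "(Omg X L)\<^sup>T = - Omg X L"
proof -
  show Oc: "Omg X L \<in> CM" by (simp add: Omg_def)
  have sO: "skw (Omg X L)" unfolding skw_def
  proof (intro allI impI)
    fix a b assume ab: "a < n" "b < n"
    have "Omg X L $$ (b,a) = ((L * X) $$ (b,a) - (X * L) $$ (b,a)) / 2" using ab by (simp add: Omg_def)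
    also have "\<dots> = ((X * L) $$ (a,b) - (L * X) $$ (a,b)) / 2"
      using skw_prod[OF X L sX sL ab] skw_prod[OF L X sL sX ab] by simp
    also have "\<dots> = - Omg X L $$ (a,b)" using ab by (simp add: Omg_def field_simps)
    finally show "Omg X L $$ (b,a) = - Omg X L $$ (a,b)" .
  qed
  then show "(Omg X L)\<^sup>T = - Omg X L" using skw_mat Oc by blast
  have key: "(\<Sum>c<n. L $$ (c,i) * X $$ (j,c)) = (L * X) $$ (i,j)" if "i < n" "j < n" for i j
  proof -
    have "(\<Sum>c<n. L $$ (c,i) * X $$ (j,c)) = (\<Sum>c<n. L $$ (i,c) * X $$ (c,j))"
    proof (rule sum.cong[OF refl])
      fix c assume "c \<in> {..<n}"
      then have "L $$ (c,i) = - L $$ (i,c)" "X $$ (j,c) = - X $$ (c,j)"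
        using that sX sL unfolding skw_def by blast+
      then show "L $$ (c,i) * X $$ (j,c) = L $$ (i,c) * X $$ (c,j)" by simp
    qed
    also have "\<dots> = (L * X) $$ (i,j)" by (rule mult_entry[symmetric]) (use that X L in auto)
    finally show ?thesis .
  qed
  show "assemble n d ns (Wblk n d ns X L k) = Omg X L * J k - J k * Omg X L"
  proof (rule eq_matI)
    fix i j assume "i < dim_row (Omg X L * J k - J k * Omg X L)" "j < dim_col (Omg X L * J k - J k * Omg X L)"
    then have ij: "i < n" "j < n" by (auto simp: Omg_def)
    have r: "(Omg X L * J k - J k * Omg X L) $$ (i,j) = Omg X L $$ (i,j) * sig k j - sig k i * Omg X L $$ (i,j)"
    proof -
      have "(Omg X L * J k) $$ (i,j) = Omg X L $$ (i,j) * sig k j" by (rule multJ_r) (use ij Oc in auto)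
      moreover have "(J k * Omg X L) $$ (i,j) = sig k i * Omg X L $$ (i,j)" by (rule multJ_l) (use ij Oc in auto)
      ultimately show ?thesis using ij by simp
    qed
    show "assemble n d ns (Wblk n d ns X L k) $$ (i,j) = (Omg X L * J k - J k * Omg X L) $$ (i,j)"
    proof -
      have Om: "Omg X L $$ (i,j) = ((L * X) $$ (i,j) - (X * L) $$ (i,j)) / 2" using ij by (simp add: Omg_def)
      have si: "sig k i = (if BOF i = k then 1 else -1)" "sig k j = (if BOF j = k then 1 else -1)"
        using ij by (simp_all add: sig_bof)
      show ?thesis unfolding r W_entry[OF X L ij] key[OF ij] Om si
        by (cases "BOF i = k"; cases "BOF j = k") (simp_all add: field_simps)
    qed
  qed (auto simp: assemble_def)
qed

lemma frob_conj: assumes V: "V \<in> CM" and M: "\<And>k. k \<in> {1..Suc d} \<Longrightarrow> M k \<in> CM"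
  and U: "\<And>k. k \<in> {1..Suc d} \<Longrightarrow> U k \<in> CM"
  shows "frob n d (tup n d (\<lambda>k. V * M k * V\<^sup>T)) U = (\<Sum>k\<in>{1..Suc d}. fr n (M k) (V\<^sup>T * U k * V))"
  unfolding frob_def
proof (rule sum.cong[OF refl])
  fix k assume k: "k \<in> {1..Suc d}"
  have "(\<Sum>i<n. \<Sum>j<n. tup n d (\<lambda>k. V * M k * V\<^sup>T) k $$ (i, j) * U k $$ (i, j)) = fr n (V * M k * V\<^sup>T) (U k)"
    using k by (simp add: tup_def fr_def)
  also have "\<dots> = fr n (M k) (V\<^sup>T * U k * V)" by (rule fr_conj) (use V M U k in auto)
  finally show "(\<Sum>i<n. \<Sum>j<n. tup n d (\<lambda>k. V * M k * V\<^sup>T) k $$ (i, j) * U k $$ (i, j)) = fr n (M k) (V\<^sup>T * U k * V)" .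
qed

end


context blocks
begin

lemma AJB_entry: assumes "A \<in> CM" "B \<in> CM" "a < n" "b < n"
  shows "(A * J k * B) $$ (a,b) = (\<Sum>c<n. sig k c * (A $$ (a,c) * B $$ (c,b)))"
proof -
  have "(A * J k * B) $$ (a,b) = (\<Sum>c<n. (A * J k) $$ (a,c) * B $$ (c,b))"
    by (rule mult_entry) (use assms in auto)
  also have "\<dots> = (\<Sum>c<n. sig k c * (A $$ (a,c) * B $$ (c,b)))"
  proof (rule sum.cong[OF refl])
    fix c assume "c \<in> {..<n}"
    then have "(A * J k) $$ (a,c) = A $$ (a,c) * sig k c" by (intro multJ_r) (use assms in auto)
    then show "(A * J k) $$ (a,c) * B $$ (c,b) = sig k c * (A $$ (a,c) * B $$ (c,b))" by simp
  qed
  finally show ?thesis .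
qed

lemma aux_pm: "(sa = 1 \<and> sb = -1) \<or> (sa = -1 \<and> sb = 1) \<Longrightarrow>
  ((x::real) * sb + sa * y) * D = ((x - y) / 2 * sb - sa * ((x - y) / 2)) * D"
  by (elim disjE conjE) (simp_all add: field_simps)

lemma T2_point:
  assumes X: "X \<in> CM" and L: "L \<in> CM" and ab: "a < n" "b < n"
    and D1: "sig k a = sig k b \<Longrightarrow> Dk = 0"
  shows "(L * X * J k + J k * X * L) $$ (a,b) * Dk = (Omg X L * J k - J k * Omg X L) $$ (a,b) * Dk"
proof (cases "sig k a = sig k b")
  case True then show ?thesis using D1 by simp
next
  case False
  have e1: "(L * X * J k) $$ (a,b) = (L * X) $$ (a,b) * sig k b" by (rule multJ_r) (use X L ab in auto)
  have "J k * X * L = J k * (X * L)" using X L by (simp add: sq_assoc)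
  moreover have "(J k * (X * L)) $$ (a,b) = sig k a * (X * L) $$ (a,b)" by (rule multJ_l) (use X L ab in auto)
  ultimately have e2: "(J k * X * L) $$ (a,b) = sig k a * (X * L) $$ (a,b)" by simp
  have e3: "(Omg X L * J k) $$ (a,b) = Omg X L $$ (a,b) * sig k b" by (rule multJ_r) (use ab in auto)
  have e4: "(J k * Omg X L) $$ (a,b) = sig k a * Omg X L $$ (a,b)" by (rule multJ_l) (use ab in auto)
  have Om: "Omg X L $$ (a,b) = ((L * X) $$ (a,b) - (X * L) $$ (a,b)) / 2" using ab by (simp add: Omg_def)
  have l: "(L * X * J k + J k * X * L) $$ (a,b) = (L * X * J k) $$ (a,b) + (J k * X * L) $$ (a,b)"
    using ab X L by simp
  have r: "(Omg X L * J k - J k * Omg X L) $$ (a,b) = (Omg X L * J k) $$ (a,b) - (J k * Omg X L) $$ (a,b)"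
    using ab by simp
  have "sig k a = 1 \<or> sig k a = -1" "sig k b = 1 \<or> sig k b = -1" by (auto simp: sig_def)
  then have "(sig k a = 1 \<and> sig k b = -1) \<or> (sig k a = -1 \<and> sig k b = 1)" using False by auto
  then show ?thesis unfolding l r e1 e2 e3 e4 Om by (rule aux_pm)
qed

lemma T3_point:
  assumes X: "X \<in> CM" and L: "L \<in> CM" and ab: "a < n" "b < n"
    and Lz: "\<And>i c. i < n \<Longrightarrow> c < n \<Longrightarrow> BOF i = BOF c \<Longrightarrow> L $$ (i,c) = 0"
    and Xz: "\<And>i c. i < n \<Longrightarrow> c < n \<Longrightarrow> BOF i = BOF c \<Longrightarrow> X $$ (i,c) = 0"
    and D1: "\<And>k. k \<in> {1..Suc d} \<Longrightarrow> sig k a = sig k b \<Longrightarrow> D k = 0"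
    and D2: "\<And>k l. k \<in> {1..Suc d} \<Longrightarrow> l \<in> {1..Suc d} \<Longrightarrow> k \<noteq> l \<Longrightarrow> a \<in> BLK k \<Longrightarrow> b \<in> BLK l \<Longrightarrow> D k + D l = 0"
  shows "(\<Sum>k\<in>{1..Suc d}. (L * J k * X + X * J k * L) $$ (a,b) * D k) = 0"
proof -
  define g where "g c = L $$ (a,c) * X $$ (c,b) + X $$ (a,c) * L $$ (c,b)" for c
  have M: "(L * J k * X + X * J k * L) $$ (a,b) = (\<Sum>c<n. sig k c * g c)" for k
  proof -
    have "(L * J k * X + X * J k * L) $$ (a,b) = (L * J k * X) $$ (a,b) + (X * J k * L) $$ (a,b)"
      using ab X L by simp
    also have "\<dots> = (\<Sum>c<n. sig k c * g c)"
      unfolding AJB_entry[OF L X ab] AJB_entry[OF X L ab] g_def by (simp add: sum.distrib algebra_simps)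
    finally show ?thesis .
  qed
  define p where "p = BOF a"
  define q where "q = BOF b"
  have pq: "p \<in> {1..Suc d}" "q \<in> {1..Suc d}" "a \<in> BLK p" "b \<in> BLK q"
    using bof_blk ab by (auto simp: p_def q_def)
  show ?thesis
  proof (cases "p = q")
    case True
    have "D k = 0" if "k \<in> {1..Suc d}" for k
      using D1[OF that] True ab by (simp add: sig_bof p_def q_def)
    then show ?thesis by simp
  next
    case False
    have "(\<Sum>k\<in>{1..Suc d}. (L * J k * X + X * J k * L) $$ (a,b) * D k)
        = (\<Sum>k\<in>{p,q}. (L * J k * X + X * J k * L) $$ (a,b) * D k)"
    proof (rule sum.mono_neutral_right)
      show "\<forall>k\<in>{1..Suc d} - {p,q}. (L * J k * X + X * J k * L) $$ (a,b) * D k = 0"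
        using D1 ab by (auto simp: sig_bof p_def q_def)
    qed (use pq in auto)
    also have "\<dots> = (L * J p * X + X * J p * L) $$ (a,b) * (D p + D q)"
    proof -
      have "(\<Sum>c<n. sig p c * g c) = (\<Sum>c<n. sig q c * g c)"
      proof (rule sum.cong[OF refl])
        fix c assume c: "c \<in> {..<n}"
        show "sig p c * g c = sig q c * g c"
        proof (cases "BOF c = p \<or> BOF c = q")
          case True
          then have "g c = 0" using Lz Xz ab c unfolding g_def p_def q_def by auto
          then show ?thesis by simp
        next
          case F: False
          then show ?thesis using c by (simp add: sig_bof)
        qed
      qed
      then show ?thesis using False by (simp add: M algebra_simps)
    qed
    also have "\<dots> = 0" using D2[OF pq(1,2) False pq(3,4)] by simp
    finally show ?thesis .
  qed
qed

end


theorem lemmaB1: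
  fixes n d :: nat and ns :: "nat \<Rightarrow> nat"
    and V V' X X' :: "real \<Rightarrow> real mat" and t :: real
  assumes d_pos: "1 \<le> d"
    and ns_first: "0 < ns 1"
    and ns_mono: "\<forall>k\<in>{1..<d}. ns k < ns (Suc k)"
    and ns_last: "ns d < n"
    and V_orth: "\<forall>s. V s \<in> orthogonal_group n"
    and V_deriv: "mat_deriv n V V'"
    and Lam_diag: "\<forall>s. \<forall>k\<in>{1..Suc d}. blockm n d ns ((V s)\<^sup>T * V' s) k k
                     = 0\<^sub>m (bsize n d ns k) (bsize n d ns k)"
    and X_skew: "\<forall>s. X s \<in> skew_mats n"
    and X_deriv: "mat_deriv n X X'"
    and X_diag: "\<forall>s. \<forall>k\<in>{1..Suc d}. blockm n d ns (X s) k k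
                     = 0\<^sub>m (bsize n d ns k) (bsize n d ns k)"
  shows "let L = (V t)\<^sup>T * V' t;
             c = tup n d (\<lambda>k. V t * Jmat n d ns k * (V t)\<^sup>T);
             TS = tangent_space n d (flag n d ns) c;
             J = Jmat n d ns;
             T1 = tup n d (\<lambda>k. V t * (X' t * J k - J k * X' t) * (V t)\<^sup>T);
             T2 = tup n d (\<lambda>k. V t * (L * X t * J k + J k * X t * L) * (V t)\<^sup>T);
             T3 = tup n d (\<lambda>k. V t * (L * J k * X t + X t * J k * L) * (V t)\<^sup>T);
             W = (\<lambda>k. assemble n d ns (Wblk n d ns (X t) L k))
         in T1 \<in> TS
            \<and> is_orth_proj n d TS T2 (tup n d (\<lambda>k. V t * W k * (V t)\<^sup>T))
            \<and> is_orth_proj n d TS T3 (tup n d (\<lambda>k. 0\<^sub>m n n))"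
proof -
  interpret blocks n d ns using d_pos ns_first ns_mono ns_last by unfold_locales
  define Vt where "Vt = V t"
  define L where "L = Vt\<^sup>T * V' t"
  define Xt where "Xt = X t"
  define X't where "X't = X' t"
  define c where "c = tup n d (\<lambda>k. Vt * J k * Vt\<^sup>T)"
  define TS where "TS = tangent_space n d (flag n d ns) c"
  have Vo: "Vt \<in> orthogonal_group n" using V_orth by (simp add: Vt_def)
  have Vc: "Vt \<in> CM" using Vo by (simp add: orthogonal_group_def)
  have V'c: "V' t \<in> CM" using V_deriv by (simp add: mat_deriv_def)
  have Lc: "L \<in> CM" using Vc V'c by (simp add: L_def sq_c)
  have Xsk: "X s \<in> CM" "(X s)\<^sup>T = - X s" for s using X_skew by (auto simp: skew_mats_def)
  have Xc: "Xt \<in> CM" using Xsk by (simp add: Xt_def)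
  have X'c: "X't \<in> CM" using X_deriv by (simp add: mat_deriv_def X't_def)
  have sXs: "X s $$ (b,a) = - X s $$ (a,b)" if "a < n" "b < n" for s a b
  proof -
    have "X s $$ (b,a) = (X s)\<^sup>T $$ (a,b)" using that Xsk(1)[of s] by simp
    also have "\<dots> = (- X s) $$ (a,b)" by (simp only: Xsk(2))
    also have "\<dots> = - X s $$ (a,b)" using that Xsk(1)[of s] by simp
    finally show ?thesis .
  qed
  have sX: "skw Xt" unfolding skw_def Xt_def using sXs by blast
  have sX': "skw X't" unfolding skw_def
  proof (intro allI impI)
    fix a b assume ab: "a < n" "b < n"
    have d1: "((\<lambda>s. X s $$ (b,a)) has_real_derivative X't $$ (b,a)) (at t)"
      using X_deriv ab by (simp add: mat_deriv_def X't_def)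
    have d2: "((\<lambda>s. X s $$ (a,b)) has_real_derivative X't $$ (a,b)) (at t)"
      using X_deriv ab by (simp add: mat_deriv_def X't_def)
    have "(\<lambda>s. X s $$ (b,a)) = (\<lambda>s. - X s $$ (a,b))" by (intro ext) (rule sXs[OF ab])
    with d1 have "((\<lambda>s. - X s $$ (a,b)) has_real_derivative X't $$ (b,a)) (at t)" by simp
    moreover have "((\<lambda>s. - X s $$ (a,b)) has_real_derivative - X't $$ (a,b)) (at t)"
      using d2 by (rule DERIV_minus)
    ultimately show "X't $$ (b,a) = - X't $$ (a,b)" by (rule DERIV_unique)
  qed
  have sL: "skw L" unfolding skw_def
  proof (intro allI impI)
    fix a b assume ab: "a < n" "b < n"
    have Vsc: "V s \<in> CM" for s using V_orth by (simp add: orthogonal_group_def)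
    have mdV: "mdat n V (V' t) t" using V_deriv by (simp add: mat_deriv_def mdat_def)
    have "mdat n (\<lambda>s. (V s)\<^sup>T * V s) ((V' t)\<^sup>T * V t + (V t)\<^sup>T * V' t) t"
      by (rule mdat_mult) (use Vsc V'c mdV mdat_transpose[of V n "V' t" t] in auto)
    then have z: "((V' t)\<^sup>T * V t + (V t)\<^sup>T * V' t) $$ (b,a) = 0"
      by (rule mdat_const_zero[where C = "1\<^sub>m n"]) (use V_orth ab in \<open>auto simp: orthogonal_group_def\<close>)
    have "(V' t)\<^sup>T * V t = ((V t)\<^sup>T * V' t)\<^sup>T" using Vsc[of t] V'c by (simp add: transpose_mult[of _ n n _ n])
    then have "(V' t)\<^sup>T * V t = L\<^sup>T" by (simp add: L_def Vt_def)
    moreover have "L\<^sup>T $$ (b,a) = L $$ (a,b)" using ab carrier_matD[OF Lc] by simp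
    ultimately have "((V' t)\<^sup>T * V t) $$ (b,a) = L $$ (a,b)" by simp
    moreover have "((V' t)\<^sup>T * V t + (V t)\<^sup>T * V' t) $$ (b,a) = ((V' t)\<^sup>T * V t) $$ (b,a) + ((V t)\<^sup>T * V' t) $$ (b,a)"
      using ab Vsc[of t] V'c by simp
    ultimately show "L $$ (b,a) = - L $$ (a,b)" using z by (simp add: L_def Vt_def)
  qed
  have bz: "M $$ (i,j) = 0"
    if M: "blockm n d ns M (BOF i) (BOF i) = 0\<^sub>m (BSZ (BOF i)) (BSZ (BOF i))" and ij: "i < n" "j < n" "BOF i = BOF j"
    for M i j
  proof -
    have pi: "i - BD (BOF i - 1) < BSZ (BOF i)" "BD (BOF i - 1) + (i - BD (BOF i - 1)) = i" using bof_pos[OF ij(1)] by auto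
    have pj: "j - BD (BOF i - 1) < BSZ (BOF i)" "BD (BOF i - 1) + (j - BD (BOF i - 1)) = j" using bof_pos[OF ij(2)] ij(3) by auto
    have "blockm n d ns M (BOF i) (BOF i) $$ (i - BD (BOF i - 1), j - BD (BOF i - 1)) = 0"
      using M pi pj by simp
    then show ?thesis using pi pj by (simp add: blockm_def)
  qed
  have Lz: "L $$ (i,c) = 0" if "i < n" "c < n" "BOF i = BOF c" for i c
    by (rule bz) (use Lam_diag bof_blk that in \<open>auto simp: L_def Vt_def\<close>)
  have Xz: "Xt $$ (i,c) = 0" if "i < n" "c < n" "BOF i = BOF c" for i c
    by (rule bz) (use X_diag bof_blk that in \<open>auto simp: Xt_def\<close>)
  have T1: "tup n d (\<lambda>k. Vt * (X't * J k - J k * X't) * Vt\<^sup>T) \<in> TS"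
    unfolding TS_def c_def by (rule tangent_G[OF Vo X'c skw_mat[OF X'c sX']])
  note We = W_eq[OF Xc Lc sX sL]
  have Z2: "tup n d (\<lambda>k. Vt * assemble n d ns (Wblk n d ns Xt L k) * Vt\<^sup>T) \<in> TS"
    unfolding TS_def c_def We(1) by (rule tangent_G[OF Vo We(2) We(3)])
  have Z3: "tup n d (\<lambda>k. 0\<^sub>m n n) \<in> TS"
  proof -
    have "c \<in> flag n d ns" unfolding c_def flag_def using Vo by blast
    moreover have "tup n d (\<lambda>k. 0\<^sub>m n n) \<in> ambient n d" by (simp add: ambient_def tup_def)
    ultimately show ?thesis unfolding TS_def tangent_space_def
      by (auto intro!: exI[of _ "\<lambda>s. c"] exI[of _ 1] simp: tup_def)
  qed
  have O2: "frob n d (tup n d (\<lambda>k. Vt * (L * Xt * J k + J k * Xt * L) * Vt\<^sup>T)) U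
          = frob n d (tup n d (\<lambda>k. Vt * assemble n d ns (Wblk n d ns Xt L k) * Vt\<^sup>T)) U" if U: "U \<in> TS" for U
  proof -
    have Uc: "k \<in> {1..Suc d} \<Longrightarrow> U k \<in> CM" for k using tangent_D_c[OF Vo] U unfolding TS_def c_def by blast
    have "frob n d (tup n d (\<lambda>k. Vt * (L * Xt * J k + J k * Xt * L) * Vt\<^sup>T)) U
        = (\<Sum>k\<in>{1..Suc d}. fr n (L * Xt * J k + J k * Xt * L) (Vt\<^sup>T * U k * Vt))"
      by (rule frob_conj) (use Vc Lc Xc Uc in \<open>auto simp: sq_c\<close>)
    also have "\<dots> = (\<Sum>k\<in>{1..Suc d}. fr n (Omg Xt L * J k - J k * Omg Xt L) (Vt\<^sup>T * U k * Vt))"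
      unfolding fr_def
      by (intro sum.cong refl T2_point[OF Xc Lc]) (use tangent_D1[OF Vo] U in \<open>auto simp: TS_def c_def\<close>)
    also have "\<dots> = frob n d (tup n d (\<lambda>k. Vt * (Omg Xt L * J k - J k * Omg Xt L) * Vt\<^sup>T)) U"
      by (rule frob_conj[symmetric]) (use Vc We(2) Uc in \<open>auto simp: sq_c\<close>)
    finally show ?thesis unfolding We(1) .
  qed
  have O3: "frob n d (tup n d (\<lambda>k. Vt * (L * J k * Xt + Xt * J k * L) * Vt\<^sup>T)) U
          = frob n d (tup n d (\<lambda>k. 0\<^sub>m n n)) U" if U: "U \<in> TS" for U
  proof -
    have Uc: "k \<in> {1..Suc d} \<Longrightarrow> U k \<in> CM" for k using tangent_D_c[OF Vo] U unfolding TS_def c_def by blast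
    define D where "D k = Vt\<^sup>T * U k * Vt" for k
    have "frob n d (tup n d (\<lambda>k. Vt * (L * J k * Xt + Xt * J k * L) * Vt\<^sup>T)) U
        = (\<Sum>k\<in>{1..Suc d}. fr n (L * J k * Xt + Xt * J k * L) (D k))"
      unfolding D_def by (rule frob_conj) (use Vc Lc Xc Uc in \<open>auto simp: sq_c\<close>)
    also have "\<dots> = (\<Sum>k\<in>{1..Suc d}. \<Sum>a<n. \<Sum>b<n. (L * J k * Xt + Xt * J k * L) $$ (a,b) * D k $$ (a,b))"
      by (simp add: fr_def)
    also have "\<dots> = (\<Sum>a<n. \<Sum>k\<in>{1..Suc d}. \<Sum>b<n. (L * J k * Xt + Xt * J k * L) $$ (a,b) * D k $$ (a,b))"
      by (rule sum.swap)
    also have "\<dots> = (\<Sum>a<n. \<Sum>b<n. \<Sum>k\<in>{1..Suc d}. (L * J k * Xt + Xt * J k * L) $$ (a,b) * D k $$ (a,b))"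
      by (rule sum.cong[OF refl], rule sum.swap)
    also have "\<dots> = 0"
    proof (rule sum.neutral, rule ballI, rule sum.neutral, rule ballI)
      fix a b assume a: "a \<in> {..<n}" and b: "b \<in> {..<n}"
      have ab: "a < n" "b < n" using a b by auto
      have d1: "D k $$ (a,b) = 0" if "k \<in> {1..Suc d}" "sig k a = sig k b" for k
        unfolding D_def by (rule tangent_D1[OF Vo]) (use U that a b in \<open>auto simp: TS_def c_def\<close>)
      have d2: "D k $$ (a,b) + D l $$ (a,b) = 0"
        if "k \<in> {1..Suc d}" "l \<in> {1..Suc d}" "k \<noteq> l" "a \<in> BLK k" "b \<in> BLK l" for k l
        unfolding D_def by (rule tangent_D2[OF Vo]) (use U that in \<open>auto simp: TS_def c_def\<close>)
      show "(\<Sum>k\<in>{1..Suc d}. (L * J k * Xt + Xt * J k * L) $$ (a,b) * D k $$ (a,b)) = 0"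
        by (rule T3_point[where D = "\<lambda>k. D k $$ (a,b)", OF Xc Lc ab Lz Xz d1 d2])
    qed
    also have "\<dots> = frob n d (tup n d (\<lambda>k. 0\<^sub>m n n)) U"
      by (simp add: frob_def tup_def)
    finally show ?thesis .
  qed
  have main: "tup n d (\<lambda>k. Vt * (X't * J k - J k * X't) * Vt\<^sup>T) \<in> TS
    \<and> is_orth_proj n d TS (tup n d (\<lambda>k. Vt * (L * Xt * J k + J k * Xt * L) * Vt\<^sup>T))
        (tup n d (\<lambda>k. Vt * assemble n d ns (Wblk n d ns Xt L k) * Vt\<^sup>T))
    \<and> is_orth_proj n d TS (tup n d (\<lambda>k. Vt * (L * J k * Xt + Xt * J k * L) * Vt\<^sup>T)) (tup n d (\<lambda>k. 0\<^sub>m n n))"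
    unfolding is_orth_proj_def using T1 Z2 Z3 O2 O3 by blast
  show ?thesis unfolding Let_def using main by (simp add: TS_def c_def Vt_def L_def Xt_def X't_def)
qed

end
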